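(* Let $p_0\approx0.7336$ be the unique solution in $(0,1)$ of the equation $4\ln(1+p)-3p=0$. For any $p\in(p_0,1)$ and any \[ \lambda\in\left(0,\ \frac{\frac4p\log(1+p)-3}{-4p\log(1+p)+2p^2}\right), \] there exists $f\in\mathcal{U}_m(\lambda)$ (with pole at $p$) such that the third Taylor coefficient $a_3(f)$ of $f$ in $|z|<p$ satisfies \[ |a_3(f)|>\frac{1}{p^2}\left(1+\lambda p^2+\lambda^2p^4\right). \]
   Context: For $\lambda\in(0,1)$ and $p\in(0,1)$, $\mathcal{U}_m(\lambda)$ denotes the family of functions $f$ meromorphic in $\mathbb{D}=\{z:|z|<1\}$ with a pole at the point $z=p$, having a Taylor expansion $f(z)=z+\sum_{k=2}^\infty a_k z^k$ for $|z|<p$, and satisfying $\left|\frac{z}{f(z)}-z\left(\frac{z}{f(z)}\right)'-1\right|<\lambda$ for every $z\in\mathbb{D}$. Here $a_3(f)$ denotes the coefficient $a_3$ in this expansion, and $\log$ is the natural logarithm. *)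

theory Defs
  imports "HOL-Complex_Analysis.Complex_Analysis"
begin

text \<open>The class U_m(lambda) with pole at p: f meromorphic in the unit disc with its
(only) pole at p, normalised f(0)=0, f'(0)=1 (Taylor expansion z + a_2 z^2 + ... in |z|<p),
and the function z/f(z) (with its removable singularities at 0 and p filled in) is
holomorphic in the disc and satisfies |z/f(z) - z (z/f(z))' - 1| < lambda there.\<close>

definition U_m :: "real \<Rightarrow> real \<Rightarrow> (complex \<Rightarrow> complex) set" where
  "U_m lam p = {f.
     f holomorphic_on (ball 0 1 - {complex_of_real p}) \<and>
     is_pole f (complex_of_real p) \<and>
     f 0 = 0 \<and> deriv f 0 = 1 \<and>
     (\<exists>g. g holomorphic_on ball 0 1 \<and>
          (\<forall>z\<in>ball 0 1 - {0, complex_of_real p}. g z = z / f z) \<and>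
          (\<forall>z\<in>ball 0 1. cmod (g z - z * deriv g z - 1) < lam))}"

definition taylor_coeff :: "(complex \<Rightarrow> complex) \<Rightarrow> nat \<Rightarrow> complex" where
  "taylor_coeff f n = (deriv ^^ n) f 0 / of_nat (fact n)"

end

theory Submission
  imports Defs
begin

definition phi :: "real \<Rightarrow> complex \<Rightarrow> complex" where
  "phi a z = (z + of_real a) / (1 + of_real a * z)"
definition FF :: "real \<Rightarrow> complex \<Rightarrow> complex" where
  "FF a z = z / of_real a - of_real ((1 - a^2) / a^2) * Ln (1 + of_real a * z)"

lemma re_pos:
  assumes "0 < a" "a < 1" "cmod z < 1"
  shows "0 < Re (1 + of_real a * z)"
proof -
  have "\<bar>Re z\<bar> < 1" using assms(3) abs_Re_le_cmod le_less_trans by blast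
  moreover have "a * \<bar>Re z\<bar> \<le> \<bar>Re z\<bar>" using assms by (intro mult_left_le_one_le) auto
  ultimately have "a * \<bar>Re z\<bar> < 1" by linarith
  then have "\<bar>a * Re z\<bar> < 1" using assms by (simp add: abs_mult)
  then show ?thesis by (auto simp: abs_less_iff)
qed

lemma not_nonpos:
  assumes "0 < a" "a < 1" "cmod z < 1"
  shows "1 + of_real a * z \<notin> \<real>\<^sub>\<le>\<^sub>0" "1 + of_real a * z \<noteq> 0"
proof -
  show "1 + of_real a * z \<notin> \<real>\<^sub>\<le>\<^sub>0" using re_pos[OF assms] by (auto simp: complex_nonpos_Reals_iff)
  show "1 + of_real a * z \<noteq> 0"
  proof
    assume "1 + of_real a * z = 0"
    then have "Re (1 + of_real a * z) = 0" by simp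
    with re_pos[OF assms] show False by simp
  qed
qed

lemma phi_bound:
  assumes "0 < a" "a < 1" "cmod z < 1"
  shows "cmod (phi a z) \<le> 1"
proof -
  have nz: "1 + of_real a * z \<noteq> 0" using not_nonpos[OF assms] by simp
  have "(cmod z)^2 < 1" using assms(3) by (simp add: abs_square_less_1)
  then have "(Re z)^2 + (Im z)^2 < 1" by (simp add: cmod_power2)
  then have nn: "0 \<le> (1 - a^2) * (1 - ((Re z)^2 + (Im z)^2))"
    using assms by (intro mult_nonneg_nonneg) (auto simp: power_le_one)
  have e1: "(cmod (1 + of_real a * z))^2 = (1 + a * Re z)^2 + (a * Im z)^2" by (simp add: cmod_power2)
  have e2: "(cmod (z + of_real a))^2 = (Re z + a)^2 + (Im z)^2" by (simp add: cmod_power2)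
  have e3: "(1 + a * x)^2 + (a * y)^2 - ((x + a)^2 + y^2) = (1 - a^2) * (1 - (x^2 + y^2))" for x y :: real
    by (simp add: power2_eq_square algebra_simps)
  have "(cmod (z + of_real a))^2 \<le> (cmod (1 + of_real a * z))^2"
    unfolding e1 e2 using nn e3[of "Re z" "Im z"] by linarith
  then have "cmod (z + of_real a) \<le> cmod (1 + of_real a * z)"
    by (rule power2_le_imp_le[OF _ norm_ge_zero])
  then show ?thesis using nz by (simp add: phi_def norm_divide divide_le_eq_1)
qed

lemma phi_alg:
  fixes c z :: complex assumes "c \<noteq> 0" "1 + c * z \<noteq> 0"
  shows "1 / c - (1 - c^2) / c^2 * (inverse (1 + c * z) * c) = (z + c) / (1 + c * z)"
proof -
  have "(1 - c^2) / c^2 * (inverse (1 + c * z) * c) = (1 - c^2) / (c * (1 + c * z))"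
  proof -
    have "(1 - c^2) / c^2 * c = (1 - c^2) / c" using assms by (simp add: power2_eq_square)
    then have "(1 - c^2) / c^2 * (inverse (1 + c * z) * c) = (1 - c^2) / c * inverse (1 + c * z)"
      by (metis mult.assoc mult.commute)
    also have "\<dots> = (1 - c^2) / (c * (1 + c * z))" by (simp add: divide_inverse inverse_mult_distrib mult.assoc)
    finally show ?thesis .
  qed
  moreover have "1 / c = (1 + c * z) / (c * (1 + c * z))" using assms by simp
  moreover have "(1 + c * z) / (c * (1 + c * z)) - (1 - c^2) / (c * (1 + c * z)) = (c * (z + c)) / (c * (1 + c * z))"
    by (simp add: diff_divide_distrib[symmetric] algebra_simps power2_eq_square)
  moreover have "(c * (z + c)) / (c * (1 + c * z)) = (z + c) / (1 + c * z)" using assms by simp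
  ultimately show ?thesis by simp
qed

lemma FF_deriv:
  assumes "0 < a" "a < 1" "cmod z < 1"
  shows "(FF a has_field_derivative phi a z) (at z)"
proof -
  note nn = not_nonpos[OF assms]
  have d1: "((\<lambda>z. Ln (1 + of_real a * z)) has_field_derivative inverse (1 + of_real a * z) * of_real a) (at z)"
    by (rule DERIV_chain2[where g="\<lambda>z. 1 + of_real a * z", OF has_field_derivative_Ln[OF nn(1)]])
       (auto intro!: derivative_eq_intros)
  have "(FF a has_field_derivative (1 / of_real a - of_real ((1 - a^2) / a^2) * (inverse (1 + of_real a * z) * of_real a))) (at z)"
    unfolding FF_def
    by (rule DERIV_diff[OF DERIV_cdivide[OF DERIV_ident] DERIV_cmult[OF d1]])
  moreover have "1 / of_real a - of_real ((1 - a^2) / a^2) * (inverse (1 + of_real a * z) * of_real a) = phi a z"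
  proof -
    have n2: "1 + of_real a * z \<noteq> 0" using nn(2) .
    have c0: "(of_real a :: complex) \<noteq> 0" using assms(1) by simp
    have e: "(of_real ((1 - a^2) / a^2) :: complex) = (1 - (of_real a)^2) / (of_real a)^2" by simp
    show ?thesis unfolding e phi_def using phi_alg[OF c0 n2] by simp
  qed
  ultimately show ?thesis by simp
qed

lemma FF0: "FF a 0 = 0" by (simp add: FF_def)

lemma FF_bound:
  assumes "0 < a" "a < 1" "cmod z < 1"
  shows "cmod (FF a z) \<le> cmod z"
proof -
  have "cmod (FF a z - FF a 0) \<le> 1 * cmod (z - 0)"
    by (rule field_differentiable_bound[where S="ball 0 1" and f'="phi a"])
       (use assms in \<open>auto intro: has_field_derivative_at_within FF_deriv phi_bound\<close>)
  then show ?thesis by (simp add: FF0)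
qed

lemma H_bound:
  assumes "0 < a" "a < 1" "cmod z < 1" "cmod w < 1"
  shows "cmod (z * FF a z - w * FF a w) \<le> 2 * cmod (z - w)"
proof (rule field_differentiable_bound[where S="ball 0 1" and f'="\<lambda>z. FF a z + z * phi a z"])
  fix u :: complex assume u: "u \<in> ball 0 1"
  then have u1: "cmod u < 1" by simp
  show "((\<lambda>z. z * FF a z) has_field_derivative FF a u + u * phi a u) (at u within ball 0 1)"
    by (rule has_field_derivative_at_within)
       (rule DERIV_cong[OF DERIV_mult[OF DERIV_ident FF_deriv[OF assms(1,2) u1]]], simp add: mult.commute)
  have "cmod (FF a u + u * phi a u) \<le> cmod (FF a u) + cmod u * cmod (phi a u)"
    by (metis norm_mult norm_triangle_ineq)
  also have "\<dots> \<le> 1 + 1 * 1"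
    using FF_bound[OF assms(1,2) u1] phi_bound[OF assms(1,2) u1] u1
    by (intro add_mono mult_mono) auto
  finally show "cmod (FF a u + u * phi a u) \<le> 2" by simp
qed (use assms in auto)

definition AA :: "real \<Rightarrow> real \<Rightarrow> real" where
  "AA a p = p / a - (1 - a^2) / a^2 * ln (1 + a * p)"
definition bb :: "real \<Rightarrow> real \<Rightarrow> real \<Rightarrow> real" where
  "bb lam p a = - (1 + lam * p * AA a p) / p"
definition gg :: "real \<Rightarrow> real \<Rightarrow> real \<Rightarrow> complex \<Rightarrow> complex" where
  "gg lam p a z = 1 + of_real (bb lam p a) * z + of_real lam * z * FF a z"
definition gd :: "real \<Rightarrow> real \<Rightarrow> real \<Rightarrow> complex \<Rightarrow> complex" where
  "gd lam p a z = of_real (bb lam p a) + of_real lam * (FF a z + z * phi a z)"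

lemma FF_p:
  assumes "0 < a" "0 < p"
  shows "FF a (of_real p) = of_real (AA a p)"
proof -
  have "1 + complex_of_real a * complex_of_real p = of_real (1 + a * p)" by simp
  then have "Ln (1 + complex_of_real a * complex_of_real p) = of_real (ln (1 + a * p))"
    using assms by (simp only:) (rule Ln_of_real, simp add: add_pos_pos)
  then show ?thesis by (simp add: FF_def AA_def)
qed

lemma gg_p:
  assumes "0 < a" "0 < p"
  shows "gg lam p a (of_real p) = 0"
proof -
  have "gg lam p a (of_real p) = of_real (1 + bb lam p a * p + lam * p * AA a p)"
    using FF_p[OF assms] by (simp add: gg_def)
  also have "1 + bb lam p a * p + lam * p * AA a p = 0"
    using assms by (simp add: bb_def field_simps)
  finally show ?thesis by simp
qed

lemma gg_deriv:
  assumes "0 < a" "a < 1" "cmod z < 1"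
  shows "(gg lam p a has_field_derivative gd lam p a z) (at z)"
  unfolding gg_def gd_def
  by (rule derivative_eq_intros FF_deriv[OF assms] refl | simp)+ (simp add: algebra_simps)

lemma gg_nonzero:
  assumes "0 < a" "a < 1" "0 < p" "p < 1" "0 \<le> lam" "2 * lam < \<bar>bb lam p a\<bar>"
    and "cmod z < 1" "z \<noteq> of_real p"
  shows "gg lam p a z \<noteq> 0"
proof -
  have p1: "cmod (of_real p :: complex) < 1" using assms by simp
  have "gg lam p a z = gg lam p a z - gg lam p a (of_real p)" using gg_p assms by simp
  also have "\<dots> = of_real (bb lam p a) * (z - of_real p)
      + of_real lam * (z * FF a z - of_real p * FF a (of_real p))"
    by (simp add: gg_def algebra_simps)
  finally have e: "gg lam p a z = \<dots>" .
  have h: "cmod (z * FF a z - of_real p * FF a (of_real p)) \<le> 2 * cmod (z - of_real p)"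
    using H_bound[OF assms(1,2,7) p1] .
  have zp: "0 < cmod (z - of_real p)" using assms(8) by simp
  have "cmod (of_real lam * (z * FF a z - of_real p * FF a (of_real p))) \<le> lam * (2 * cmod (z - of_real p))"
    using h assms(5) by (simp add: norm_mult mult_left_mono)
  also have "\<dots> < \<bar>bb lam p a\<bar> * cmod (z - of_real p)"
    using assms(6) zp by (simp add: mult.assoc[symmetric])
  also have "\<dots> = cmod (of_real (bb lam p a) * (z - of_real p))" by (simp add: norm_mult)
  finally have "cmod (of_real lam * (z * FF a z - of_real p * FF a (of_real p)))
     < cmod (of_real (bb lam p a) * (z - of_real p))" .
  then show ?thesis unfolding e
    by (metis add.commute add_diff_cancel_left' diff_zero norm_minus_commute order_less_irrefl)
qed

lemma gg_cond:
  assumes "0 < a" "a < 1" "0 < lam" "cmod z < 1"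
  shows "cmod (gg lam p a z - z * gd lam p a z - 1) < lam"
proof -
  have "gg lam p a z - z * gd lam p a z - 1 = - (of_real lam * z^2 * phi a z)"
    by (simp add: gg_def gd_def algebra_simps power2_eq_square)
  then have "cmod (gg lam p a z - z * gd lam p a z - 1) = lam * (cmod z)^2 * cmod (phi a z)"
    using assms by (simp add: norm_mult norm_power)
  also have "\<dots> \<le> lam * (cmod z)^2 * 1"
    using phi_bound[OF assms(1,2,4)] assms by (intro mult_left_mono) auto
  also have "\<dots> < lam"
    using assms by (simp add: abs_square_less_1)
  finally show ?thesis .
qed

lemma phi_deriv0:
  assumes "0 < a" "a < 1"
  shows "(phi a has_field_derivative (1 - of_real a * of_real a)) (at 0)"
proof -
  have "((\<lambda>z. (z + of_real a) / (1 + of_real a * z)) has_field_derivative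
      (((1 + 0) * (1 + of_real a * 0) - (0 + of_real a) * (0 + of_real a * 1)) / ((1 + of_real a * 0) * (1 + of_real a * 0)))) (at (0::complex))"
    by (rule DERIV_divide[OF DERIV_add[OF DERIV_ident DERIV_const] DERIV_add[OF DERIV_const DERIV_cmult[OF DERIV_ident]]]) simp
  then show ?thesis by (simp add: phi_def[abs_def])
qed

lemma main_construct:
  assumes a: "0 < a" "a < 1" and p: "0 < p" "p < 1" and lam: "0 < lam"
    and bl: "2 * lam < \<bar>bb lam p a\<bar>"
  shows "(\<lambda>z. z / gg lam p a z) \<in> U_m lam p
       \<and> taylor_coeff (\<lambda>z. z / gg lam p a z) 3 = of_real ((bb lam p a)^2 - lam * a)"
proof -
  define g where "g = gg lam p a"
  define f where "f = (\<lambda>z. z / g z)"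
  define P where "P = (of_real p :: complex)"
  define S where "S = ball (0::complex) 1 - {P}"
  have oS: "open S" by (simp add: S_def open_Diff)
  have PS: "P \<in> ball 0 1" using p by (simp add: P_def)
  have dg: "\<And>z. z \<in> ball 0 1 \<Longrightarrow> (g has_field_derivative gd lam p a z) (at z)"
    using gg_deriv[OF a] by (simp add: g_def)
  have gnz: "\<And>z. z \<in> ball 0 1 \<Longrightarrow> z \<noteq> P \<Longrightarrow> g z \<noteq> 0"
    using gg_nonzero[OF a p _ bl] lam by (simp add: g_def P_def)
  have g0: "g 0 = 1" by (simp add: g_def gg_def)
  have gP: "g P = 0" using gg_p a p by (simp add: g_def P_def)
  have hg: "g holomorphic_on ball 0 1"
    unfolding holomorphic_on_open[OF open_ball] using dg by blast
  have hgS: "g holomorphic_on S" using hg by (rule holomorphic_on_subset) (auto simp: S_def)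
  have hf: "f holomorphic_on S"
    unfolding f_def using gnz hgS by (intro holomorphic_intros) (auto simp: S_def)
  have S0: "0 \<in> S" using p by (simp add: S_def P_def)
  have df0: "(f has_field_derivative 1) (at 0)"
  proof -
    have "(f has_field_derivative ((1 * g 0 - 0 * gd lam p a 0) / (g 0 * g 0))) (at 0)"
      unfolding f_def by (rule DERIV_divide[OF DERIV_ident dg]) (auto simp: g0)
    then show ?thesis by (simp add: g0)
  qed
  have f0: "f 0 = 0" by (simp add: f_def)
  have pole: "is_pole f P"
  proof -
    have ev: "eventually (\<lambda>z. z \<in> ball 0 1) (nhds P)"
      using PS by (intro eventually_nhds_in_open) auto
    have "isCont g P" using dg[OF PS] by (rule DERIV_isCont)
    then have "(g \<longlongrightarrow> 0) (at P)" using gP by (simp add: isCont_def)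
    moreover have "eventually (\<lambda>z. g z \<noteq> 0) (at P)"
      using ev unfolding eventually_at_filter by eventually_elim (use gnz in auto)
    ultimately have "filterlim g (at 0) (at P)" by (rule filterlim_atI)
    then show ?thesis unfolding f_def
      using is_pole_divide[where f="\<lambda>z. z" and z=P and g=g] p by (simp add: P_def)
  qed
  have inU: "f \<in> U_m lam p"
    unfolding U_m_def
  proof (intro CollectI conjI exI[of _ g] ballI)
    show "f holomorphic_on ball 0 1 - {complex_of_real p}" using hf by (simp add: S_def P_def)
    show "is_pole f (complex_of_real p)" using pole by (simp add: P_def)
    show "f 0 = 0" by (rule f0)
    show "deriv f 0 = 1" using df0 by (rule DERIV_imp_deriv)
    show "g holomorphic_on ball 0 1" by (rule hg)
    fix z assume z: "z \<in> ball 0 1 - {0, complex_of_real p}"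
    then show "g z = z / f z" using gnz[of z] by (auto simp: f_def P_def)
  next
    fix z :: complex assume z: "z \<in> ball 0 1"
    have "deriv g z = gd lam p a z" using dg[OF z] by (rule DERIV_imp_deriv)
    then show "cmod (g z - z * deriv g z - 1) < lam"
      using gg_cond[OF a lam] z by (simp add: g_def)
  qed
  have prod: "\<And>n. (deriv ^^ n) (\<lambda>w. f w * g w) 0 = (deriv ^^ n) (\<lambda>w. w) 0"
  proof (rule higher_deriv_cong_ev)
    show "eventually (\<lambda>w. f w * g w = w) (nhds 0)"
      using eventually_nhds_in_open[OF oS S0]
      by eventually_elim (use gnz in \<open>auto simp: f_def S_def\<close>)
  qed simp
  have lm: "\<And>n. (deriv ^^ n) (\<lambda>w. f w * g w) 0 =
           (\<Sum>i = 0..n. of_nat (n choose i) * (deriv ^^ i) f 0 * (deriv ^^ (n-i)) g 0)"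
    by (rule higher_deriv_mult[OF hf hgS oS S0])
  have id2: "(deriv ^^ 2) (\<lambda>w::complex. w) 0 = 0" by (simp add: numeral_2_eq_2)
  have id3: "(deriv ^^ 3) (\<lambda>w::complex. w) 0 = 0" by (simp add: numeral_3_eq_3)
  have f1: "(deriv ^^ 1) f 0 = 1" using DERIV_imp_deriv[OF df0] by simp
  have g1: "(deriv ^^ 1) g 0 = of_real (bb lam p a)"
    using DERIV_imp_deriv[OF dg[of 0]] by (simp add: gd_def FF0)
  have g2: "(deriv ^^ 2) g 0 = 2 * of_real lam * of_real a"
  proof -
    have "(deriv ^^ 2) g 0 = deriv (deriv g) 0" by (simp add: numeral_2_eq_2)
    also have "deriv (deriv g) 0 = deriv (gd lam p a) 0"
    proof (rule deriv_cong_ev)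
      show "eventually (\<lambda>w. deriv g w = gd lam p a w) (nhds 0)"
      proof -
        have "eventually (\<lambda>w. w \<in> ball (0::complex) 1) (nhds 0)"
          by (intro eventually_nhds_in_open) auto
        then show ?thesis by eventually_elim (simp add: DERIV_imp_deriv dg)
      qed
    qed simp
    also have "deriv (gd lam p a) 0 = of_real lam * (phi a 0 + (1 * phi a 0 + 0 * (1 - of_real a * of_real a)))"
    proof (rule DERIV_imp_deriv)
      show "(gd lam p a has_field_derivative of_real lam * (phi a 0 + (1 * phi a 0 + 0 * (1 - of_real a * of_real a)))) (at 0)"
      proof -
        have dF: "(FF a has_field_derivative phi a 0) (at 0)" using FF_deriv[OF a, of 0] by simp
        have "((\<lambda>z. of_real (bb lam p a) + of_real lam * (FF a z + z * phi a z)) has_field_derivative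
           (0 + of_real lam * (phi a 0 + (1 * phi a 0 + (1 - of_real a * of_real a) * 0)))) (at 0)"
          by (rule DERIV_add[OF DERIV_const DERIV_cmult[OF DERIV_add[OF dF DERIV_mult[OF DERIV_ident phi_deriv0[OF a]]]]])
        then show ?thesis by (simp add: gd_def[abs_def])
      qed
    qed
    also have "\<dots> = 2 * of_real lam * of_real a" by (simp add: phi_def)
    finally show ?thesis .
  qed
  have f2: "(deriv ^^ 2) f 0 = - 2 * of_real (bb lam p a)"
  proof -
    have "0 = (\<Sum>i = 0..2. of_nat (2 choose i) * (deriv ^^ i) f 0 * (deriv ^^ (2-i)) g 0)"
      using prod[of 2] lm[of 2] id2 by simp
    also have "\<dots> = 2 * of_real (bb lam p a) + (deriv ^^ 2) f 0"
      using f1 g1 f0 g0 by (simp add: numeral_2_eq_2)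
    finally have "(deriv ^^ 2) f 0 + 2 * of_real (bb lam p a) = 0" by (simp add: add.commute)
    then have "(deriv ^^ 2) f 0 = - (2 * of_real (bb lam p a))" using eq_neg_iff_add_eq_0 by blast
    then show ?thesis by simp
  qed
  have f3: "(deriv ^^ 3) f 0 = 6 * of_real ((bb lam p a)^2 - lam * a)"
  proof -
    have "0 = (\<Sum>i = 0..3. of_nat (3 choose i) * (deriv ^^ i) f 0 * (deriv ^^ (3-i)) g 0)"
      using prod[of 3] lm[of 3] id3 by simp
    also have "\<dots> = 3 * (deriv ^^ 1) f 0 * (deriv ^^ 2) g 0 + 3 * (deriv ^^ 2) f 0 * (deriv ^^ 1) g 0 + (deriv ^^ 3) f 0 * g 0"
      using f0 by (simp add: numeral_3_eq_3 numeral_2_eq_2)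
    also have "\<dots> = 6 * of_real lam * of_real a - 6 * (of_real (bb lam p a))^2 + (deriv ^^ 3) f 0"
      using f1 g1 g2 f2 g0 by (simp add: power2_eq_square)
    finally have "(deriv ^^ 3) f 0 + (6 * of_real lam * of_real a - 6 * (of_real (bb lam p a))^2) = 0"
      by (simp add: add.commute)
    then have "(deriv ^^ 3) f 0 = - (6 * of_real lam * of_real a - 6 * (of_real (bb lam p a))^2)"
      using eq_neg_iff_add_eq_0 by blast
    then show ?thesis by (simp add: algebra_simps)
  qed
  have "taylor_coeff f 3 = of_real ((bb lam p a)^2 - lam * a)"
    unfolding taylor_coeff_def f3 by (simp add: fact_numeral)
  with inU show ?thesis by (simp add: f_def g_def)
qed

lemma ln_lower: fixes x :: real assumes "0 \<le> x" shows "2 * x / (2 + x) \<le> ln (1 + x)"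
proof -
  define h where "h = (\<lambda>x::real. ln (1 + x) - 2 * x / (2 + x))"
  have "h 0 \<le> h x"
  proof (rule DERIV_nonneg_imp_increasing_open[OF assms])
    fix y :: real assume y: "0 < y" "y < x"
    have "(h has_real_derivative (1 / (1 + y) - (2 * (2 + y) - 2 * y * 1) / ((2 + y) * (2 + y)))) (at y)"
      unfolding h_def using y by (auto intro!: derivative_eq_intros)
    moreover have "(2 * (2 + y) - 2 * y * 1) / ((2 + y) * (2 + y)) \<le> 1 / (1 + y)"
    proof -
      have "(2 * (2 + y) - 2 * y * 1) * (1 + y) \<le> 1 * ((2 + y) * (2 + y))"
        using y by (simp add: algebra_simps)
      then show ?thesis using y by (simp add: divide_simps)
    qed
    ultimately show "\<exists>d. (h has_real_derivative d) (at y) \<and> 0 \<le> d" by force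
  next
    show "continuous_on {0..x} h" unfolding h_def
      by (intro continuous_intros) auto
  qed
  then show ?thesis by (simp add: h_def)
qed

lemma D_deriv:
  assumes "0 < p"
  shows "((\<lambda>x. (1 + lam * p * AA x p)^2 - lam * x * p^2) has_real_derivative
     (2 * (1 + lam * p^2) * lam * p * (2 * ln (1 + p) - p) - lam * p^2)) (at 1)"
proof -
  have d1: "((\<lambda>x. p / x) has_real_derivative -p) (at 1)"
    by (rule DERIV_cong[OF DERIV_divide[OF DERIV_const DERIV_ident]]) simp_all
  have d2: "((\<lambda>x. (1 - x^2) / x^2) has_real_derivative -2) (at 1)"
    by (rule DERIV_cong[OF DERIV_divide[OF DERIV_diff[OF DERIV_const DERIV_pow] DERIV_pow]]) simp_all
  have dg: "((\<lambda>x. 1 + x * p) has_real_derivative p) (at 1)"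
    by (rule DERIV_cong[OF DERIV_add[OF DERIV_const DERIV_mult[OF DERIV_ident DERIV_const]]]) simp
  have d3: "((\<lambda>x. ln (1 + x * p)) has_real_derivative (1 / (1 + p)) * p) (at 1)"
    by (rule DERIV_cong[OF DERIV_chain2[OF DERIV_ln_divide dg]]) (use assms in simp_all)
  have du: "((\<lambda>x. p / x - (1 - x^2) / x^2 * ln (1 + x * p)) has_real_derivative (2 * ln (1 + p) - p)) (at 1)"
    by (rule DERIV_cong[OF DERIV_diff[OF d1 DERIV_mult[OF d2 d3]]]) simp
  have dA: "((\<lambda>x. AA x p) has_real_derivative (2 * ln (1 + p) - p)) (at 1)"
    using du by (simp add: AA_def[abs_def])
  have AA1: "AA 1 p = p" by (simp add: AA_def)
  show ?thesis
    by (rule DERIV_cong[OF DERIV_diff[OF DERIV_power[OF DERIV_add[OF DERIV_const DERIV_cmult[OF dA]]]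
          DERIV_mult[OF DERIV_cmult[OF DERIV_ident] DERIV_const]]])
       (simp add: AA1 algebra_simps power2_eq_square)
qed

theorem mainTheorem7:
  fixes p0 p lam :: real
  assumes "0 < p0" "p0 < 1" "4 * ln (1 + p0) - 3 * p0 = 0"
    and "p0 < p" "p < 1"
    and "0 < lam"
    and "lam < ((4 / p) * ln (1 + p) - 3) / (- 4 * p * ln (1 + p) + 2 * p^2)"
  shows "\<exists>f \<in> U_m lam p. cmod (taylor_coeff f 3) > (1 / p^2) * (1 + lam * p^2 + lam^2 * p^4)"
proof -
  define L where "L = ln (1 + p)"
  have p0: "0 < p" using assms by linarith
  have p1: "p < 1" using assms by linarith
  have lam0: "0 < lam" using assms by linarith
  have Lb: "2 * p / (2 + p) \<le> L" unfolding L_def using ln_lower[of p] p0 by simp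
  have Lp: "p < 2 * L"
  proof -
    have "p / 2 < 2 * p / (2 + p)" using p0 p1 by (simp add: field_simps)
    then show ?thesis using Lb by linarith
  qed
  have Dn: "- 4 * p * L + 2 * p^2 < 0"
  proof -
    have "- 4 * p * L + 2 * p^2 = 2 * p * (p - 2 * L)" by (simp add: algebra_simps power2_eq_square)
    also have "\<dots> < 0" using p0 Lp by (simp add: mult_pos_neg)
    finally show ?thesis .
  qed
  have "(4 / p) * L - 3 < lam * (- 4 * p * L + 2 * p^2)"
    using assms(7) Dn unfolding L_def[symmetric] by (simp add: neg_less_divide_eq)
  then have "p * ((4 / p) * L - 3) < p * (lam * (- 4 * p * L + 2 * p^2))"
    using p0 by simp
  then have K: "lam * (2 * p^2 * (2 * L - p)) < 3 * p - 4 * L"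
    using p0 by (simp add: algebra_simps power2_eq_square)
  have lamh: "lam < 1 / 2"
  proof (rule ccontr)
    assume "\<not> lam < 1 / 2"
    then have "1 / 2 * (2 * p^2 * (2 * L - p)) \<le> lam * (2 * p^2 * (2 * L - p))"
      using Lp p0 by (intro mult_right_mono) auto
    with K have "p^2 * (2 * L - p) < 3 * p - 4 * L" by simp
    then have A1: "L * (2 * p^2 + 4) < 3 * p + p^3" by (simp add: algebra_simps power2_eq_square power3_eq_cube)
    have "2 * p / (2 + p) * (2 * p^2 + 4) \<le> L * (2 * p^2 + 4)"
      using Lb by (intro mult_right_mono) auto
    moreover have "3 * p + p^3 \<le> 2 * p / (2 + p) * (2 * p^2 + 4)"
    proof -
      have q: "0 \<le> 2 - p + p^2" using p1 zero_le_power2[of p] by linarith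
      have "0 \<le> p * ((1 - p) * (2 - p + p^2))"
        using p0 p1 q by (intro mult_nonneg_nonneg) auto
      then have "(3 * p + p^3) * (2 + p) \<le> 2 * p * (2 * p^2 + 4)"
        by (simp add: algebra_simps power2_eq_square power3_eq_cube)
      then show ?thesis using p0 by (simp add: le_divide_eq)
    qed
    ultimately show False using A1 by linarith
  qed
  define D where "D = (\<lambda>x. (1 + lam * p * AA x p)^2 - lam * x * p^2)"
  have dD: "(D has_real_derivative (2 * (1 + lam * p^2) * lam * p * (2 * L - p) - lam * p^2)) (at 1)"
    unfolding D_def L_def using D_deriv[OF p0] .
  have dneg: "2 * (1 + lam * p^2) * lam * p * (2 * L - p) - lam * p^2 < 0"
  proof -
    have "2 * (1 + lam * p^2) * lam * p * (2 * L - p) - lam * p^2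
        = lam * p * (4 * L - 3 * p + lam * (2 * p^2 * (2 * L - p)))"
      by (simp add: algebra_simps power2_eq_square)
    also have "\<dots> < 0" using K lam0 p0 by (intro mult_pos_neg) auto
    finally show ?thesis .
  qed
  obtain d where d: "d > 0" "\<And>h. h > 0 \<Longrightarrow> h < d \<Longrightarrow> D 1 < D (1 - h)"
    using has_real_derivative_neg_dec_left[OF dD dneg] by auto
  define a where "a = 1 - min d 1 / 2"
  have a0: "0 < a" "a < 1" using d(1) by (auto simp: a_def min_def)
  have Da: "D 1 < D a" unfolding a_def using d by (auto simp: min_def)
  have D1: "D 1 = (1 + lam * p^2)^2 - lam * p^2"
    by (simp add: D_def AA_def power2_eq_square mult.assoc)
  have A0: "0 \<le> AA a p"
  proof -
    have "ln (1 + a * p) \<le> a * p" using a0 p0 by (intro ln_add_one_self_le_self) auto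
    then have "(1 - a^2) / a^2 * ln (1 + a * p) \<le> (1 - a^2) / a^2 * (a * p)"
      using a0 by (intro mult_left_mono) (auto simp: power_le_one)
    also have "\<dots> = (1 - a^2) * p / a" using a0 by (simp add: power2_eq_square field_simps)
    also have "\<dots> \<le> p / a" using a0 p0 by (simp add: divide_right_mono mult_left_le_one_le)
    finally show ?thesis by (simp add: AA_def)
  qed
  have bbv: "bb lam p a = - (1 + lam * p * AA a p) / p" by (simp add: bb_def)
  have bl: "2 * lam < \<bar>bb lam p a\<bar>"
  proof -
    have pos: "1 \<le> 1 + lam * p * AA a p" using A0 lam0 p0 by simp
    have "\<bar>bb lam p a\<bar> = (1 + lam * p * AA a p) / p" using pos p0 by (simp add: bbv)
    also have "1 \<le> \<dots>" using pos p0 p1 by (simp add: le_divide_eq)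
    finally show ?thesis using lamh by linarith
  qed
  from main_construct[OF a0 p0 p1 lam0 bl] obtain f where
    fU: "f \<in> U_m lam p" and tc: "taylor_coeff f 3 = of_real ((bb lam p a)^2 - lam * a)" by blast
  have "(bb lam p a)^2 - lam * a = D a / p^2"
    using p0 by (simp add: D_def bbv power_divide field_simps power2_eq_square)
  moreover have "D 1 / p^2 < D a / p^2" using Da p0 by (simp add: divide_strict_right_mono)
  moreover have "D 1 / p^2 = (1 / p^2) * (1 + lam * p^2 + lam^2 * p^4)"
    using p0 unfolding D1 by (simp add: field_simps power2_eq_square power4_eq_xxxx)
  moreover have "0 \<le> (1 / p^2) * (1 + lam * p^2 + lam^2 * p^4)" using lam0 by simp
  ultimately have cgt: "(1 / p^2) * (1 + lam * p^2 + lam^2 * p^4) < (bb lam p a)^2 - lam * a"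
    and cnn: "0 \<le> (1 / p^2) * (1 + lam * p^2 + lam^2 * p^4)" by linarith+
  have "cmod (taylor_coeff f 3) = \<bar>(bb lam p a)^2 - lam * a\<bar>"
    unfolding tc by (rule norm_of_real)
  also have "\<dots> = (bb lam p a)^2 - lam * a" using cgt cnn by simp
  finally have "(1 / p^2) * (1 + lam * p^2 + lam^2 * p^4) < cmod (taylor_coeff f 3)"
    using cgt by simp
  with fU show ?thesis by blast
qed

end
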